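(* For $\lambda\geq 1$ and any $n\ge1$, $Z=\sum_{\sigma\in\Omega}\lambda^{-p(\sigma)}\geq 0.12\cdot(1.67/\lambda)^{p_{max}}$, where $p_{max}=2n-2$.
   Context: Let $\Gamma$ be the triangular lattice. A configuration of $n$ particles is a set of $n$ vertices of $\Gamma$, considered up to translation. It is connected if the subgraph of $\Gamma$ induced by occupied vertices is connected; a hole is a maximal finite connected set of unoccupied vertices; $\Omega$ is the set of connected configurations of $n$ particles with no holes. For $\sigma\in\Omega$, $p(\sigma)$ is the length of the closed walk around its single external boundary, with an edge traversed twice counted twice. *)

theory Defs
  imports Complex_Main
begin

text \<open>Triangular lattice in axial coordinates: vertices are pairs of integers, and the six
  neighbour directions, listed in counterclockwise order (angles 0, 60, ..., 300 degrees in the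
  standard embedding (q,r) maps to (q + r/2, r*sqrt 3/2)), are given by tri_dir 0, ..., tri_dir 5.\<close>

type_synonym vertex = "int \<times> int"

definition vadd :: "vertex \<Rightarrow> vertex \<Rightarrow> vertex" where
  "vadd a b = (fst a + fst b, snd a + snd b)"

definition tri_dir :: "nat \<Rightarrow> vertex" where
  "tri_dir k = (case k mod 6 of
      0 \<Rightarrow> (1, 0) | Suc 0 \<Rightarrow> (0, 1) | Suc (Suc 0) \<Rightarrow> (-1, 1)
    | Suc (Suc (Suc 0)) \<Rightarrow> (-1, 0) | Suc (Suc (Suc (Suc 0))) \<Rightarrow> (0, -1)
    | _ \<Rightarrow> (1, -1))"

definition tri_adj :: "vertex \<Rightarrow> vertex \<Rightarrow> bool" where
  "tri_adj x y \<longleftrightarrow> (\<exists>k<6. y = vadd x (tri_dir k))"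

definition conf_connected :: "vertex set \<Rightarrow> bool" where
  "conf_connected S \<longleftrightarrow>
     (\<forall>x\<in>S. \<forall>y\<in>S. (x, y) \<in> {(a, b). a \<in> S \<and> b \<in> S \<and> tri_adj a b}\<^sup>*)"

text \<open>A hole is a maximal finite connected set of unoccupied vertices, i.e. a finite connected
  component of the subgraph induced by the unoccupied vertices.  No holes: every such component
  is infinite.\<close>
definition hole_free :: "vertex set \<Rightarrow> bool" where
  "hole_free S \<longleftrightarrow>
     (\<forall>x. x \<notin> S \<longrightarrow>
        infinite {y. (x, y) \<in> {(a, b). a \<notin> S \<and> b \<notin> S \<and> tri_adj a b}\<^sup>*})"

text \<open>A dart is a directed edge (u,v).  At v, coming from u, the walk continues
  to the first occupied neighbour of v found by rotating clockwise from the direction of u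
  (ending with u itself, i.e. backtracking, if there is no other). This traces the face on the
  left of each dart.\<close>
definition dir_idx :: "vertex \<Rightarrow> vertex \<Rightarrow> nat" where
  "dir_idx v u = (THE k. k < 6 \<and> u = vadd v (tri_dir k))"

definition next_dart :: "vertex set \<Rightarrow> vertex \<times> vertex \<Rightarrow> vertex \<times> vertex" where
  "next_dart S d = (let u = fst d; v = snd d; k = dir_idx v u;
      j = (LEAST j. 1 \<le> j \<and> j \<le> 6 \<and> vadd v (tri_dir ((k + 6 - j) mod 6)) \<in> S)
    in (v, vadd v (tri_dir ((k + 6 - j) mod 6))))"

text \<open>Lowest occupied vertex (minimal r, then minimal q); it lies on the external boundary,
  and its downward directions (indices 3,4,5) point into the outer face.\<close>
definition lowest :: "vertex set \<Rightarrow> vertex" where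
  "lowest S = (THE u. u \<in> S \<and> (\<forall>v\<in>S. snd u < snd v \<or> (snd u = snd v \<and> fst u \<le> fst v)))"

text \<open>The first dart of the external boundary walk: leave the lowest vertex towards the first
  occupied neighbour found rotating clockwise from the (empty, exterior) direction 4.\<close>
definition start_dart :: "vertex set \<Rightarrow> vertex \<times> vertex" where
  "start_dart S = next_dart S (vadd (lowest S) (tri_dir 4), lowest S)"

text \<open>Perimeter p: length of the closed walk around the external boundary (number of darts
  until it closes up); edges traversed twice are counted twice. A single particle has p = 0.\<close>
definition perimeter :: "vertex set \<Rightarrow> nat" where
  "perimeter S = (if card S \<le> 1 then 0
     else (LEAST k. 0 < k \<and> (next_dart S ^^ k) (start_dart S) = start_dart S))"

definition translate :: "vertex \<Rightarrow> vertex set \<Rightarrow> vertex set" where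
  "translate w S = (\<lambda>x. vadd x w) ` S"

definition Omega :: "nat \<Rightarrow> vertex set set set" where
  "Omega n = {C. \<exists>S. C = {translate w S | w. True} \<and> finite S \<and> card S = n
                   \<and> conf_connected S \<and> hole_free S}"

definition perim_class :: "vertex set set \<Rightarrow> nat" where
  "perim_class C = perimeter (SOME S. S \<in> C)"

end

theory Submission
  imports Defs
begin



lemma tri_dir_vals:
  "tri_dir 0 = (1,0)" "tri_dir 1 = (0,1)" "tri_dir 2 = (-1,1)" "tri_dir 3 = (-1,0)"
  "tri_dir 4 = (0,-1)" "tri_dir 5 = (1,-1)" "tri_dir (Suc 0) = (0,1)"
  by (simp_all add: tri_dir_def)


lemma less6: "(k::nat) < 6 \<longleftrightarrow> k = 0 \<or> k = 1 \<or> k = 2 \<or> k = 3 \<or> k = 4 \<or> k = 5"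
  by auto


lemma ex6: "(\<exists>k<6. P k) \<longleftrightarrow> P 0 \<or> P 1 \<or> P 2 \<or> P 3 \<or> P 4 \<or> P (5::nat)"
  unfolding less6 by blast


lemma tri_adj_iff: "tri_adj a b \<longleftrightarrow>
   (fst b - fst a, snd b - snd a) \<in> {(1,0),(0,1),(-1,1),(-1,0),(0,-1),(1,-1)}"
  unfolding tri_adj_def ex6 by (cases a; cases b; auto simp: vadd_def tri_dir_vals)


lemma tri_adj_sym: "tri_adj a b \<longleftrightarrow> tri_adj b a"
  unfolding tri_adj_iff by (cases a; cases b; auto)


lemma tri_adj_irrefl: "\<not> tri_adj a a"
  unfolding tri_adj_iff by auto


lemma tri_dir_inj: "k < 6 \<Longrightarrow> j < 6 \<Longrightarrow> tri_dir k = tri_dir j \<Longrightarrow> k = j"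
  unfolding less6 by (auto simp: tri_dir_vals)


lemma vadd_cancel: "vadd v a = vadd v b \<longleftrightarrow> a = b"
  by (cases a; cases b; auto simp: vadd_def)


lemma dir_idx_eq: "k < 6 \<Longrightarrow> dir_idx v (vadd v (tri_dir k)) = k"
  unfolding dir_idx_def
  by (rule the_equality) (auto simp: vadd_cancel dest: tri_dir_inj)


lemma tri_adj_dir: "tri_adj a b \<Longrightarrow> \<exists>k<6. a = vadd b (tri_dir k)"
  using tri_adj_sym tri_adj_def by metis


lemma tri_dir_mod: "tri_dir (k mod 6) = tri_dir k"
  by (simp add: tri_dir_def)


definition darts :: "vertex set \<Rightarrow> (vertex \<times> vertex) set" where
  "darts S = {(a,b). a \<in> S \<and> b \<in> S \<and> tri_adj a b}"


lemma J6: "1 \<le> (J::nat) \<Longrightarrow> J \<le> 6 \<Longrightarrow> J = 1 \<or> J = 2 \<or> J = 3 \<or> J = 4 \<or> J = 5 \<or> J = 6"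
  by auto

lemma arith1: "(k::nat) < 6 \<Longrightarrow> 1 \<le> J \<Longrightarrow> J \<le> 6 \<Longrightarrow> (k+6-J) mod 6 = m \<Longrightarrow> k = (m+J) mod 6"
  by (drule J6, assumption) (auto simp: less6)

lemma arith2: "(k1::nat) < 6 \<Longrightarrow> k2 < 6 \<Longrightarrow> 1 \<le> J1 \<Longrightarrow> J1 < J2 \<Longrightarrow> J2 \<le> 6 \<Longrightarrow>
   (k1+6-J1) mod 6 = (k2+6-J2) mod 6 \<Longrightarrow> (k2+6-(J2-J1)) mod 6 = k1"
  apply (frule J6, simp)
  apply (subgoal_tac "1 \<le> J2") apply (drule J6[of J2], assumption) 
  apply (auto simp: less6)
  done

lemma arith3: "(k::nat) < 6 \<Longrightarrow> k' < 6 \<Longrightarrow> \<exists>j. 1 \<le> j \<and> j \<le> 6 \<and> (k+6-j) mod 6 = k'"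
  by (rule exI[of _ "if k' = k then 6 else (k+6-k') mod 6"]) (auto simp: less6)



lemma nd_J:
  fixes S v k
  defines "P \<equiv> \<lambda>j. 1 \<le> j \<and> j \<le> (6::nat) \<and> vadd v (tri_dir ((k+6-j) mod 6)) \<in> S"
  assumes k: "k < 6" and ex: "\<exists>j. P j"
  shows "next_dart S (vadd v (tri_dir k), v) = (v, vadd v (tri_dir ((k+6-(LEAST j. P j)) mod 6)))
     \<and> P (LEAST j. P j) \<and> (\<forall>j. j < (LEAST j. P j) \<longrightarrow> \<not> P j)"
proof -
  have "P (LEAST j. P j)" using ex by (metis LeastI_ex)
  moreover have "\<forall>j. j < (LEAST j. P j) \<longrightarrow> \<not> P j" using not_less_Least by blast
  moreover have "next_dart S (vadd v (tri_dir k), v) = (v, vadd v (tri_dir ((k+6-(LEAST j. P j)) mod 6)))"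
    unfolding next_dart_def Let_def using dir_idx_eq[OF k] by (simp add: P_def)
  ultimately show ?thesis by blast
qed


lemma dart_dir: "(u,v) \<in> darts S \<Longrightarrow> \<exists>k<6. u = vadd v (tri_dir k) \<and> u \<in> S \<and> v \<in> S"
  unfolding darts_def using tri_adj_dir by auto


lemma P6: "k < (6::nat) \<Longrightarrow> vadd v (tri_dir k) \<in> S \<Longrightarrow>
   \<exists>j. 1 \<le> j \<and> j \<le> (6::nat) \<and> vadd v (tri_dir ((k+6-j) mod 6)) \<in> S"
  by (rule exI[of _ 6]) simp


lemma nd_maps: assumes "d \<in> darts S" shows "next_dart S d \<in> darts S"
proof -
  obtain u v where d: "d = (u,v)" by (cases d)
  from dart_dir[of u v S] assms d obtain k where k: "k<6" "u = vadd v (tri_dir k)" "u \<in> S" "v \<in> S" by auto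
  define P where "P \<equiv> \<lambda>j. 1 \<le> j \<and> j \<le> (6::nat) \<and> vadd v (tri_dir ((k+6-j) mod 6)) \<in> S"
  have ex: "\<exists>j. P j" using P6[OF k(1)] k unfolding P_def by auto
  note nd = nd_J[OF k(1) ex[unfolded P_def], folded P_def]
  have "tri_adj v (vadd v (tri_dir ((k+6-(LEAST j. P j)) mod 6)))"
    unfolding tri_adj_def by (rule exI[of _ "(k+6-(LEAST j. P j)) mod 6"]) simp
  then show ?thesis using nd k d unfolding darts_def P_def by auto
qed


lemma nd_inj: "inj_on (next_dart S) (darts S)"
proof (rule inj_onI)
  fix d1 d2 assume d1: "d1 \<in> darts S" and d2: "d2 \<in> darts S" and eq: "next_dart S d1 = next_dart S d2"
  obtain u1 v1 where d1e: "d1 = (u1,v1)" by (cases d1)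
  obtain u2 v2 where d2e: "d2 = (u2,v2)" by (cases d2)
  from dart_dir[of u1 v1 S] d1 d1e obtain k1 where k1: "k1<6" "u1 = vadd v1 (tri_dir k1)" "u1 \<in> S" by auto
  from dart_dir[of u2 v2 S] d2 d2e obtain k2 where k2: "k2<6" "u2 = vadd v2 (tri_dir k2)" "u2 \<in> S" by auto
  define P1 where "P1 \<equiv> \<lambda>j. 1 \<le> j \<and> j \<le> (6::nat) \<and> vadd v1 (tri_dir ((k1+6-j) mod 6)) \<in> S"
  define P2 where "P2 \<equiv> \<lambda>j. 1 \<le> j \<and> j \<le> (6::nat) \<and> vadd v2 (tri_dir ((k2+6-j) mod 6)) \<in> S"
  have ex1: "\<exists>j. P1 j" using P6[OF k1(1)] k1 unfolding P1_def by auto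
  have ex2: "\<exists>j. P2 j" using P6[OF k2(1)] k2 unfolding P2_def by auto
  note n1 = nd_J[OF k1(1) ex1[unfolded P1_def], folded P1_def]
  note n2 = nd_J[OF k2(1) ex2[unfolded P2_def], folded P2_def]
  define J1 where "J1 = (LEAST j. P1 j)"
  define J2 where "J2 = (LEAST j. P2 j)"
  have p1: "P1 J1" using ex1 unfolding J1_def by (rule LeastI_ex)
  have p2: "P2 J2" using ex2 unfolding J2_def by (rule LeastI_ex)
  have l1: "\<forall>j<J1. \<not> P1 j" unfolding J1_def using not_less_Least by blast
  have l2: "\<forall>j<J2. \<not> P2 j" unfolding J2_def using not_less_Least by blast
  have e1: "next_dart S d1 = (v1, vadd v1 (tri_dir ((k1+6-J1) mod 6)))"
    using n1 d1e k1 unfolding J1_def by simp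
  have e2: "next_dart S d2 = (v2, vadd v2 (tri_dir ((k2+6-J2) mod 6)))"
    using n2 d2e k2 unfolding J2_def by simp
  have vv: "v1 = v2" using eq e1 e2 by auto
  have "tri_dir ((k1+6-J1) mod 6) = tri_dir ((k2+6-J2) mod 6)"
    using eq e1 e2 vv by (auto simp: vadd_cancel)
  then have m: "(k1+6-J1) mod 6 = (k2+6-J2) mod 6" by (rule tri_dir_inj[rotated 2]) auto
  have JJ: "J1 = J2"
  proof (rule ccontr)
    assume "J1 \<noteq> J2"
    then consider "J1 < J2" | "J2 < J1" by linarith
    then show False
    proof cases
      case 1
      have "(k2+6-(J2-J1)) mod 6 = k1" using arith2[OF k1(1) k2(1) _ 1 _ m] p1 p2 unfolding P1_def P2_def by auto
      then have "P2 (J2 - J1)" using 1 p2 k1 vv unfolding P2_def by auto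
      then show False using l2 1 p1 unfolding P1_def by auto
    next
      case 2
      have "(k1+6-(J1-J2)) mod 6 = k2" using arith2[OF k2(1) k1(1) _ 2 _ m[symmetric]] p1 p2 unfolding P1_def P2_def by auto
      then have "P1 (J1 - J2)" using 2 p1 k2 vv unfolding P1_def by auto
      then show False using l1 2 p2 unfolding P2_def by auto
    qed
  qed
  have "k1 = k2" using arith1[OF k1(1), of J1 "(k1+6-J1) mod 6"] arith1[OF k2(1), of J2 "(k2+6-J2) mod 6"]
      p1 p2 JJ m unfolding P1_def P2_def by auto
  then show "d1 = d2" using d1e d2e k1 k2 vv by simp
qed


lemma funpow_in: "f ` D \<subseteq> D \<Longrightarrow> d \<in> D \<Longrightarrow> (f^^i) d \<in> D"
  by (induction i) auto


lemma funpow_inj: "f ` D \<subseteq> D \<Longrightarrow> inj_on f D \<Longrightarrow> inj_on (f^^i) D"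
proof (induction i)
  case 0 then show ?case by simp
next
  case (Suc i)
  have "inj_on (f \<circ> (f^^i)) D"
    by (rule comp_inj_on) (use Suc funpow_in[of f D] in \<open>auto intro: inj_on_subset\<close>)
  then show ?case by (simp add: comp_def)
qed


lemma orbit_return:
  assumes fin: "finite D" and maps: "f ` D \<subseteq> D" and inj: "inj_on f D" and d: "d \<in> D"
  shows "\<exists>k. 0 < k \<and> k \<le> card D \<and> (f^^k) d = d"
proof -
  have "\<not> inj_on (\<lambda>i. (f^^i) d) {0..card D}"
  proof
    assume "inj_on (\<lambda>i. (f^^i) d) {0..card D}"
    moreover have "(\<lambda>i. (f^^i) d) ` {0..card D} \<subseteq> D" using funpow_in[OF maps] d by auto
    ultimately have "card {0..card D} \<le> card D" using card_inj_on_le fin by blast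
    then show False by simp
  qed
  then obtain i j where ij: "i \<in> {0..card D}" "j \<in> {0..card D}" "i \<noteq> j" "(f^^i) d = (f^^j) d"
    unfolding inj_on_def by blast
  then obtain a b where ab: "a < b" "b \<le> card D" "(f^^a) d = (f^^b) d"
    by (metis atLeastAtMost_iff linorder_neqE_nat)
  have "(f^^b) d = (f^^a) ((f^^(b-a)) d)" using ab(1)
    by (metis funpow_add le_add_diff_inverse less_imp_le o_apply)
  then have "(f^^a) ((f^^(b-a)) d) = (f^^a) d" using ab by simp
  moreover have "(f^^(b-a)) d \<in> D" using funpow_in[OF maps d] .
  ultimately have "(f^^(b-a)) d = d" using funpow_inj[OF maps inj, of a] d unfolding inj_on_def by blast
  then show ?thesis using ab by (intro exI[of _ "b-a"]) auto
qed


lemma lowest_in: assumes fin: "finite S" and ne: "S \<noteq> {}" shows "lowest S \<in> S"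
proof -
  define Q where "Q \<equiv> \<lambda>u. u \<in> S \<and> (\<forall>v\<in>S. snd u < snd v \<or> (snd u = snd v \<and> fst u \<le> fst v))"
  define m where "m = Min (snd ` S)"
  define S1 where "S1 = {v\<in>S. snd v = m}"
  have "m \<in> snd ` S" unfolding m_def using fin ne by simp
  then have S1ne: "S1 \<noteq> {}" unfolding S1_def by auto
  have S1fin: "finite S1" unfolding S1_def using fin by simp
  define m2 where "m2 = Min (fst ` S1)"
  have "m2 \<in> fst ` S1" unfolding m2_def using S1fin S1ne by simp
  then obtain u where u: "u \<in> S1" "fst u = m2" by auto
  have "Q u"
    unfolding Q_def
  proof (intro conjI ballI)
    show "u \<in> S" using u unfolding S1_def by auto
    fix v assume v: "v \<in> S"
    have "snd u \<le> snd v" using u v fin unfolding S1_def m_def by auto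
    moreover have "snd u = snd v \<Longrightarrow> fst u \<le> fst v"
      using u v S1fin unfolding S1_def m2_def by auto
    ultimately show "snd u < snd v \<or> (snd u = snd v \<and> fst u \<le> fst v)" by linarith
  qed
  moreover have "\<And>w. Q w \<Longrightarrow> w = u"
  proof -
    fix w assume "Q w"
    then show "w = u" using \<open>Q u\<close> unfolding Q_def
      by (metis antisym not_less_iff_gr_or_eq prod_eqI)
  qed
  ultimately have "Q (lowest S)" unfolding lowest_def Q_def[symmetric] by (metis theI)
  then show ?thesis unfolding Q_def by blast
qed


lemma perim_le:
  assumes fin: "finite S" and c2: "2 \<le> card S" and noiso: "\<forall>v\<in>S. \<exists>w\<in>S. tri_adj v w"
  shows "perimeter S \<le> card (darts S)"
proof -
  have ne: "S \<noteq> {}" using c2 by auto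
  define L where "L = lowest S"
  have L: "L \<in> S" using lowest_in[OF fin ne] L_def by simp
  obtain w where w: "w \<in> S" "tri_adj L w" using noiso L by blast
  obtain k' where k': "k' < 6" "w = vadd L (tri_dir k')" using w(2) unfolding tri_adj_def by blast
  have ex: "\<exists>j. 1 \<le> j \<and> j \<le> (6::nat) \<and> vadd L (tri_dir ((4+6-j) mod 6)) \<in> S"
    using arith3[of 4 k'] k' w by auto
  note nd = nd_J[of 4 L S, OF _ ex]
  define J where "J = (LEAST j. 1 \<le> j \<and> j \<le> (6::nat) \<and> vadd L (tri_dir ((4+6-j) mod 6)) \<in> S)"
  have sd: "start_dart S = (L, vadd L (tri_dir ((4+6-J) mod 6)))" and inS: "vadd L (tri_dir ((4+6-J) mod 6)) \<in> S"
    using nd unfolding start_dart_def L_def[symmetric] J_def by auto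
  have "tri_adj L (vadd L (tri_dir ((4+6-J) mod 6)))"
    unfolding tri_adj_def by (rule exI[of _ "(4+6-J) mod 6"]) simp
  then have sdD: "start_dart S \<in> darts S" using sd inS L unfolding darts_def by auto
  have "darts S \<subseteq> S \<times> S" unfolding darts_def by auto
  then have finD: "finite (darts S)" using fin by (metis finite_SigmaI finite_subset)
  obtain k where k: "0 < k" "k \<le> card (darts S)" "(next_dart S ^^ k) (start_dart S) = start_dart S"
    using orbit_return[OF finD _ nd_inj sdD] nd_maps by blast
  have "perimeter S = (LEAST k. 0 < k \<and> (next_dart S ^^ k) (start_dart S) = start_dart S)"
    unfolding perimeter_def using c2 by simp
  also have "\<dots> \<le> k" using k by (intro Least_le) auto
  finally show ?thesis using k by simp
qed



type_synonym state = "vertex set \<times> int \<times> int \<times> int \<times> bool"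

definition newv :: "state \<Rightarrow> nat \<Rightarrow> vertex" where
  "newv s x = (case s of (S,q,lo,hi,up) \<Rightarrow>
     if x = 0 then (if up then (q,hi+1) else (q,lo-1))
     else if x = 1 then (q+1,lo-1) else (q+1,hi))"

definition att :: "state \<Rightarrow> nat \<Rightarrow> vertex" where
  "att s x = (case s of (S,q,lo,hi,up) \<Rightarrow>
     if x = 0 then (if up then (q,hi) else (q,lo))
     else if x = 1 then (q,lo) else (q,hi))"

definition step :: "state \<Rightarrow> nat \<Rightarrow> state" where
  "step s x = (case s of (S,q,lo,hi,up) \<Rightarrow>
     if x = 0 then (if up then (insert (q,hi+1) S, q, lo, hi+1, True)
                    else (insert (q,lo-1) S, q, lo-1, hi, False))
     else if x = 1 then (insert (q+1,lo-1) S, q+1, lo-1, lo-1, False)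
     else (insert (q+1,hi) S, q+1, hi, hi, True))"

fun run :: "state \<Rightarrow> nat list \<Rightarrow> state" where
  "run s [] = s"
| "run s (x#xs) = run (step s x) xs"

definition init :: state where "init = ({(0,0)}, 0, 0, 0, True)"

definition colconv :: "vertex set \<Rightarrow> bool" where
  "colconv S = (\<forall>c y1 y2 y. (c,y1)\<in>S \<longrightarrow> (c,y2)\<in>S \<longrightarrow> y1 \<le> y \<longrightarrow> y \<le> y2 \<longrightarrow> (c,y)\<in>S)"

definition Inv :: "state \<Rightarrow> bool" where
  "Inv s = (case s of (S,q,lo,hi,up) \<Rightarrow>
     finite S \<and> lo \<le> hi \<and> 0 \<le> q \<and> (0,0) \<in> S \<and>
     (\<forall>v\<in>S. 0 \<le> fst v \<and> fst v \<le> q) \<and>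
     (\<forall>y. (q,y) \<in> S \<longleftrightarrow> lo \<le> y \<and> y \<le> hi) \<and>
     colconv S \<and>
     (up \<longrightarrow> (\<forall>y. (q-1,y)\<in>S \<longrightarrow> y \<le> lo)) \<and>
     (\<not>up \<longrightarrow> (\<forall>y. (q-1,y)\<in>S \<longrightarrow> hi+1 \<le> y)) \<and>
     (q = 0 \<longrightarrow> up \<and> lo = 0) \<and> (\<forall>y. (0,y)\<in>S \<longrightarrow> 0 \<le> y))"

lemma Inv_init: "Inv init"
  unfolding Inv_def init_def colconv_def by auto

lemma tri_adj_pair: "tri_adj (a1,a2) (b1,b2) \<longleftrightarrow>
   (b1 = a1+1 \<and> b2 = a2) \<or> (b1 = a1 \<and> b2 = a2+1) \<or> (b1 = a1-1 \<and> b2 = a2+1) \<or>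
   (b1 = a1-1 \<and> b2 = a2) \<or> (b1 = a1 \<and> b2 = a2-1) \<or> (b1 = a1+1 \<and> b2 = a2-1)"
  unfolding tri_adj_iff by auto

lemma colconv_insert:
  assumes "colconv S" and "\<forall>y. (c0,y) \<in> insert (c0,y0) S \<longleftrightarrow> a \<le> y \<and> y \<le> b"
  shows "colconv (insert (c0,y0) S)"
  unfolding colconv_def
proof (intro allI impI)
  fix c y1 y2 y
  assume h: "(c,y1) \<in> insert (c0,y0) S" "(c,y2) \<in> insert (c0,y0) S" "y1 \<le> y" "y \<le> y2"
  show "(c,y) \<in> insert (c0,y0) S"
  proof (cases "c = c0")
    case True then show ?thesis using h assms(2) by (metis order_trans)
  next
    case False then show ?thesis using h assms(1) unfolding colconv_def by blast
  qed
qed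


lemma step_facts:
  assumes I: "Inv (S,q,lo,hi,up)" and x: "x \<le> 2"
  shows "newv (S,q,lo,hi,up) x \<notin> S \<and> att (S,q,lo,hi,up) x \<in> S
    \<and> (\<forall>z\<in>S. tri_adj (newv (S,q,lo,hi,up) x) z \<longleftrightarrow> z = att (S,q,lo,hi,up) x)
    \<and> fst (step (S,q,lo,hi,up) x) = insert (newv (S,q,lo,hi,up) x) S
    \<and> Inv (step (S,q,lo,hi,up) x)"
proof -
  have fin: "finite S" and lh: "lo \<le> hi" and q0: "0 \<le> q" and o: "(0,0) \<in> S"
    and cols: "\<forall>v\<in>S. 0 \<le> fst v \<and> fst v \<le> q"
    and colq: "\<forall>y. (q,y) \<in> S \<longleftrightarrow> lo \<le> y \<and> y \<le> hi"
    and conv: "colconv S"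
    and pu: "up \<longrightarrow> (\<forall>y. (q-1,y)\<in>S \<longrightarrow> y \<le> lo)"
    and pd: "\<not>up \<longrightarrow> (\<forall>y. (q-1,y)\<in>S \<longrightarrow> hi+1 \<le> y)"
    and z0: "q = 0 \<longrightarrow> up \<and> lo = 0" and c0: "\<forall>y. (0,y)\<in>S \<longrightarrow> 0 \<le> y"
    using I unfolding Inv_def by auto
  have colS: "\<And>c y. (c,y) \<in> S \<Longrightarrow> 0 \<le> c \<and> c \<le> q" using cols by fastforce
  consider (a) "x = 0" "up" | (b) "x = 0" "\<not> up" | (c) "x = 1" | (d) "x = 2" using x by linarith
  then show ?thesis
  proof cases
    case a
    have nv: "newv (S,q,lo,hi,up) x = (q,hi+1)" "att (S,q,lo,hi,up) x = (q,hi)"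
      "step (S,q,lo,hi,up) x = (insert (q,hi+1) S, q, lo, hi+1, True)"
      using a by (auto simp: newv_def att_def step_def)
    have adj: "\<forall>z\<in>S. tri_adj (q,hi+1) z \<longleftrightarrow> z = (q,hi)"
    proof
      fix z assume z: "z \<in> S"
      obtain z1 z2 where zz: "z = (z1,z2)" by (cases z)
      have "tri_adj (q,hi+1) (z1,z2) \<Longrightarrow> (z1,z2) = (q,hi)"
        unfolding tri_adj_pair
      proof (elim disjE conjE)
      qed (use z zz colS[of z1 z2] colq pu a lh in force)+
      moreover have "tri_adj (q,hi+1) (q,hi)" unfolding tri_adj_pair by simp
      ultimately show "tri_adj (q,hi+1) z \<longleftrightarrow> z = (q,hi)" using zz by blast
    qed
    have c1: "\<forall>y. (q,y) \<in> insert (q,hi+1) S \<longleftrightarrow> lo \<le> y \<and> y \<le> hi+1"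
    proof
      fix y
      have e1: "(q,y) \<in> insert (q,hi+1) S \<longleftrightarrow> y = hi+1 \<or> (q,y) \<in> S" by simp
      have e2: "(q,y) \<in> S \<longleftrightarrow> lo \<le> y \<and> y \<le> hi" using colq by blast
      show "(q,y) \<in> insert (q,hi+1) S \<longleftrightarrow> lo \<le> y \<and> y \<le> hi+1"
        unfolding e1 using e2 lh by arith
    qed
    have i1: "\<forall>v\<in>insert (q,hi+1) S. 0 \<le> fst v \<and> fst v \<le> q" using cols q0 by simp
    have i2: "True \<longrightarrow> (\<forall>y. (q-1,y) \<in> insert (q,hi+1) S \<longrightarrow> y \<le> lo)" using pu a by simp
    have i3: "q = 0 \<longrightarrow> True \<and> lo = 0" using z0 by simp
    have i4: "\<forall>y. (0,y) \<in> insert (q,hi+1) S \<longrightarrow> 0 \<le> y" using c0 z0 lh by auto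
    have "Inv (insert (q,hi+1) S, q, lo, hi+1, True)"
      unfolding Inv_def prod.case
      by (intro conjI i1 i2 i3 i4 c1 colconv_insert[OF conv c1]) (use fin lh q0 o in simp_all)
    then show ?thesis using nv adj colq lh by auto
  next
    case b
    have nv: "newv (S,q,lo,hi,up) x = (q,lo-1)" "att (S,q,lo,hi,up) x = (q,lo)"
      "step (S,q,lo,hi,up) x = (insert (q,lo-1) S, q, lo-1, hi, False)"
      using b by (auto simp: newv_def att_def step_def)
    have adj: "\<forall>z\<in>S. tri_adj (q,lo-1) z \<longleftrightarrow> z = (q,lo)"
    proof
      fix z assume z: "z \<in> S"
      obtain z1 z2 where zz: "z = (z1,z2)" by (cases z)
      have "tri_adj (q,lo-1) (z1,z2) \<Longrightarrow> (z1,z2) = (q,lo)"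
        unfolding tri_adj_pair
      proof (elim disjE conjE)
      qed (use z zz colS[of z1 z2] colq pd b lh in force)+
      moreover have "tri_adj (q,lo-1) (q,lo)" unfolding tri_adj_pair by simp
      ultimately show "tri_adj (q,lo-1) z \<longleftrightarrow> z = (q,lo)" using zz by blast
    qed
    have c1: "\<forall>y. (q,y) \<in> insert (q,lo-1) S \<longleftrightarrow> lo-1 \<le> y \<and> y \<le> hi"
    proof
      fix y
      have e1: "(q,y) \<in> insert (q,lo-1) S \<longleftrightarrow> y = lo-1 \<or> (q,y) \<in> S" by simp
      have e2: "(q,y) \<in> S \<longleftrightarrow> lo \<le> y \<and> y \<le> hi" using colq by blast
      show "(q,y) \<in> insert (q,lo-1) S \<longleftrightarrow> lo-1 \<le> y \<and> y \<le> hi"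
        unfolding e1 using e2 lh by arith
    qed
    have qn: "q \<noteq> 0" using z0 b by auto
    have i1: "\<forall>v\<in>insert (q,lo-1) S. 0 \<le> fst v \<and> fst v \<le> q" using cols q0 by simp
    have i2: "\<not>False \<longrightarrow> (\<forall>y. (q-1,y) \<in> insert (q,lo-1) S \<longrightarrow> hi+1 \<le> y)" using pd b by simp
    have i3: "q = 0 \<longrightarrow> False \<and> lo-1 = 0" using qn by simp
    have i4: "\<forall>y. (0,y) \<in> insert (q,lo-1) S \<longrightarrow> 0 \<le> y" using c0 qn by auto
    have "Inv (insert (q,lo-1) S, q, lo-1, hi, False)"
      unfolding Inv_def prod.case
      by (intro conjI i1 i2 i3 i4 c1 colconv_insert[OF conv c1]) (use fin lh q0 o in simp_all)
    then show ?thesis using nv adj colq lh by auto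
  next
    case c
    have nv: "newv (S,q,lo,hi,up) x = (q+1,lo-1)" "att (S,q,lo,hi,up) x = (q,lo)"
      "step (S,q,lo,hi,up) x = (insert (q+1,lo-1) S, q+1, lo-1, lo-1, False)"
      using c by (auto simp: newv_def att_def step_def)
    have adj: "\<forall>z\<in>S. tri_adj (q+1,lo-1) z \<longleftrightarrow> z = (q,lo)"
    proof
      fix z assume z: "z \<in> S"
      obtain z1 z2 where zz: "z = (z1,z2)" by (cases z)
      have "tri_adj (q+1,lo-1) (z1,z2) \<Longrightarrow> (z1,z2) = (q,lo)"
        unfolding tri_adj_pair
      proof (elim disjE conjE)
      qed (use z zz colS[of z1 z2] colq lh in force)+
      moreover have "tri_adj (q+1,lo-1) (q,lo)" unfolding tri_adj_pair by simp
      ultimately show "tri_adj (q+1,lo-1) z \<longleftrightarrow> z = (q,lo)" using zz by blast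
    qed
    have nS: "\<And>y. (q+1,y) \<notin> S" using colS by fastforce
    have c1: "\<forall>y. (q+1,y) \<in> insert (q+1,lo-1) S \<longleftrightarrow> lo-1 \<le> y \<and> y \<le> lo-1"
    proof
      fix y
      have e1: "(q+1,y) \<in> insert (q+1,lo-1) S \<longleftrightarrow> y = lo-1 \<or> (q+1,y) \<in> S" by simp
      have e2: "(q+1,y) \<notin> S" using nS by blast
      show "(q+1,y) \<in> insert (q+1,lo-1) S \<longleftrightarrow> lo-1 \<le> y \<and> y \<le> lo-1"
        unfolding e1 using e2 lh by arith
    qed
    have i1: "\<forall>v\<in>insert (q+1,lo-1) S. 0 \<le> fst v \<and> fst v \<le> q+1" using cols q0 by auto
    have i2: "\<not>False \<longrightarrow> (\<forall>y. (q+1-1,y) \<in> insert (q+1,lo-1) S \<longrightarrow> lo-1+1 \<le> y)" using colq by simp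
    have i3: "q+1 = 0 \<longrightarrow> False \<and> lo-1 = 0" using q0 by simp
    have i4: "\<forall>y. (0,y) \<in> insert (q+1,lo-1) S \<longrightarrow> 0 \<le> y" using c0 q0 by auto
    have "Inv (insert (q+1,lo-1) S, q+1, lo-1, lo-1, False)"
      unfolding Inv_def prod.case
      by (intro conjI i1 i2 i3 i4 c1 colconv_insert[OF conv c1]) (use fin lh q0 o in simp_all)
    then show ?thesis using nv adj colq lh nS by auto
  next
    case d
    have nv: "newv (S,q,lo,hi,up) x = (q+1,hi)" "att (S,q,lo,hi,up) x = (q,hi)"
      "step (S,q,lo,hi,up) x = (insert (q+1,hi) S, q+1, hi, hi, True)"
      using d by (auto simp: newv_def att_def step_def)
    have adj: "\<forall>z\<in>S. tri_adj (q+1,hi) z \<longleftrightarrow> z = (q,hi)"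
    proof
      fix z assume z: "z \<in> S"
      obtain z1 z2 where zz: "z = (z1,z2)" by (cases z)
      have "tri_adj (q+1,hi) (z1,z2) \<Longrightarrow> (z1,z2) = (q,hi)"
        unfolding tri_adj_pair
      proof (elim disjE conjE)
      qed (use z zz colS[of z1 z2] colq lh in force)+
      moreover have "tri_adj (q+1,hi) (q,hi)" unfolding tri_adj_pair by simp
      ultimately show "tri_adj (q+1,hi) z \<longleftrightarrow> z = (q,hi)" using zz by blast
    qed
    have nS: "\<And>y. (q+1,y) \<notin> S" using colS by fastforce
    have c1: "\<forall>y. (q+1,y) \<in> insert (q+1,hi) S \<longleftrightarrow> hi \<le> y \<and> y \<le> hi"
    proof
      fix y
      have e1: "(q+1,y) \<in> insert (q+1,hi) S \<longleftrightarrow> y = hi \<or> (q+1,y) \<in> S" by simp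
      have e2: "(q+1,y) \<notin> S" using nS by blast
      show "(q+1,y) \<in> insert (q+1,hi) S \<longleftrightarrow> hi \<le> y \<and> y \<le> hi"
        unfolding e1 using e2 lh by arith
    qed
    have i1: "\<forall>v\<in>insert (q+1,hi) S. 0 \<le> fst v \<and> fst v \<le> q+1" using cols q0 by auto
    have i2: "True \<longrightarrow> (\<forall>y. (q+1-1,y) \<in> insert (q+1,hi) S \<longrightarrow> y \<le> hi)" using colq by simp
    have i3: "q+1 = 0 \<longrightarrow> True \<and> hi = 0" using q0 by simp
    have i4: "\<forall>y. (0,y) \<in> insert (q+1,hi) S \<longrightarrow> 0 \<le> y" using c0 q0 by auto
    have "Inv (insert (q+1,hi) S, q+1, hi, hi, True)"
      unfolding Inv_def prod.case
      by (intro conjI i1 i2 i3 i4 c1 colconv_insert[OF conv c1]) (use fin lh q0 o in simp_all)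
    then show ?thesis using nv adj colq lh nS by auto
  qed
qed



lemma Inv_step: "Inv s \<Longrightarrow> x \<le> 2 \<Longrightarrow> Inv (step s x)"
  by (cases s) (use step_facts in blast)

lemma darts_insert:
  assumes fin: "finite S" and x: "x \<notin> S" and u: "u \<in> S" and adj: "\<forall>z\<in>S. tri_adj x z \<longleftrightarrow> z = u"
  shows "card (darts (insert x S)) \<le> card (darts S) + 2"
proof -
  have sub: "darts (insert x S) \<subseteq> insert (x,u) (insert (u,x) (darts S))"
  proof
    fix d assume d: "d \<in> darts (insert x S)"
    obtain a b where ab: "d = (a,b)" by (cases d)
    have a: "a \<in> insert x S" and b: "b \<in> insert x S" and t: "tri_adj a b"
      using d ab unfolding darts_def by auto
    show "d \<in> insert (x,u) (insert (u,x) (darts S))"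
    proof (cases "a = x")
      case True
      then have "b \<noteq> x" using t tri_adj_irrefl by blast
      then have "b \<in> S" using b by blast
      then have "b = u" using adj t True by blast
      then show ?thesis using ab True by simp
    next
      case False
      then have aS: "a \<in> S" using a by blast
      show ?thesis
      proof (cases "b = x")
        case True
        then have "tri_adj x a" using t tri_adj_sym by blast
        then have "a = u" using adj aS by blast
        then show ?thesis using ab True by simp
      next
        case False
        then have "b \<in> S" using b by blast
        then show ?thesis using aS t ab unfolding darts_def by auto
      qed
    qed
  qed
  have "darts S \<subseteq> S \<times> S" unfolding darts_def by auto
  then have finD: "finite (darts S)" using fin by (metis finite_SigmaI finite_subset)
  have "card (darts (insert x S)) \<le> card (insert (x,u) (insert (u,x) (darts S)))"
    by (rule card_mono) (use finD sub in auto)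
  also have "\<dots> \<le> Suc (card (insert (u,x) (darts S)))" by (rule card_insert_le_m1) auto
  also have "\<dots> \<le> Suc (Suc (card (darts S)))" using card_insert_le_m1 by (simp add: card_insert_if finD)
  finally show ?thesis by simp
qed

lemma conn_insert:
  assumes c: "conf_connected S" and u: "u \<in> S" and t1: "tri_adj x u"
  shows "conf_connected (insert x S)"
proof -
  define R where "R = {(a, b). a \<in> S \<and> b \<in> S \<and> tri_adj a b}"
  define R' where "R' = {(a, b). a \<in> insert x S \<and> b \<in> insert x S \<and> tri_adj a b}"
  have RR: "R \<subseteq> R'" unfolding R_def R'_def by auto
  have t2: "tri_adj u x" using t1 tri_adj_sym by blast
  have xu: "(x,u) \<in> R'" and ux: "(u,x) \<in> R'" using u t1 t2 unfolding R'_def by auto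
  have inS: "\<And>a b. a \<in> S \<Longrightarrow> b \<in> S \<Longrightarrow> (a,b) \<in> R'\<^sup>*"
    using c rtrancl_mono[OF RR] unfolding conf_connected_def R_def by blast
  show ?thesis unfolding conf_connected_def R'_def[symmetric]
  proof (intro ballI)
    fix a b assume a: "a \<in> insert x S" and b: "b \<in> insert x S"
    show "(a,b) \<in> R'\<^sup>*"
    proof (cases "a = x")
      case True
      show ?thesis
      proof (cases "b = x")
        case True then show ?thesis using \<open>a = x\<close> by simp
      next
        case False then have "b \<in> S" using b by blast
        then show ?thesis using True xu inS[OF u] by (meson converse_rtrancl_into_rtrancl)
      qed
    next
      case False then have aS: "a \<in> S" using a by blast
      show ?thesis
      proof (cases "b = x")
        case True then show ?thesis using ux inS[OF aS u] by (meson rtrancl_into_rtrancl)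
      next
        case False then show ?thesis using b aS inS by blast
      qed
    qed
  qed
qed


lemma run_props:
  assumes "Inv s" and "\<forall>x\<in>set w. x \<le> 2"
  shows "Inv (run s w) \<and> card (fst (run s w)) = card (fst s) + length w \<and>
    card (darts (fst (run s w))) \<le> card (darts (fst s)) + 2 * length w \<and>
    (conf_connected (fst s) \<longrightarrow> conf_connected (fst (run s w)))"
  using assms
proof (induction w arbitrary: s)
  case Nil then show ?case by simp
next
  case (Cons x w)
  obtain S q lo hi up where s: "s = (S,q,lo,hi,up)" by (cases s)
  have x: "x \<le> 2" using Cons.prems by simp
  note sf = step_facts[OF Cons.prems(1)[unfolded s] x]
  have fin: "finite S" using Cons.prems(1) unfolding s Inv_def by simp
  define nw where "nw = newv (S,q,lo,hi,up) x"
  define at0 where "at0 = att (S,q,lo,hi,up) x"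
  have nwS: "nw \<notin> S" and atS: "at0 \<in> S" and adj: "\<forall>z\<in>S. tri_adj nw z \<longleftrightarrow> z = at0"
    and fs: "fst (step s x) = insert nw S" and I': "Inv (step s x)"
    using sf unfolding nw_def at0_def s by auto
  have IH: "Inv (run (step s x) w) \<and> card (fst (run (step s x) w)) = card (fst (step s x)) + length w \<and>
    card (darts (fst (run (step s x) w))) \<le> card (darts (fst (step s x))) + 2 * length w \<and>
    (conf_connected (fst (step s x)) \<longrightarrow> conf_connected (fst (run (step s x) w)))"
    using Cons.IH[OF I'] Cons.prems by simp
  have c1: "card (fst (step s x)) = card (fst s) + 1" using fs fin nwS s by simp
  have d1: "card (darts (fst (step s x))) \<le> card (darts (fst s)) + 2"
    using darts_insert[OF fin nwS atS adj] fs s by simp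
  have "tri_adj nw at0" using adj atS by blast
  then have con: "conf_connected (fst s) \<longrightarrow> conf_connected (fst (step s x))"
    using conn_insert[OF _ atS] fs s by auto
  show ?case using IH c1 d1 con by simp
qed

definition gS :: "nat list \<Rightarrow> vertex set" where "gS w = fst (run init w)"

definition cls :: "vertex set \<Rightarrow> vertex set set" where
  "cls S = {translate w S | w. True}"

lemma hole_free_colconv:
  assumes cc: "colconv S"
  shows "hole_free S"
  unfolding hole_free_def
proof (intro allI impI)
  fix x assume x: "x \<notin> S"
  define R where "R = {(a, b). a \<notin> S \<and> b \<notin> S \<and> tri_adj a b}"
  obtain c y0 where xe: "x = (c,y0)" by (cases x)
  have "(\<forall>k::nat. (c, y0 + int k) \<notin> S) \<or> (\<forall>k::nat. (c, y0 - int k) \<notin> S)"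
  proof (rule ccontr)
    assume "\<not> ?thesis"
    then obtain k1 k2 :: nat where "(c, y0 + int k1) \<in> S" "(c, y0 - int k2) \<in> S" by blast
    moreover have "y0 - int k2 \<le> y0" "y0 \<le> y0 + int k1" by simp_all
    ultimately have "(c,y0) \<in> S" using cc unfolding colconv_def by blast
    then show False using x xe by simp
  qed
  then show "infinite {y. (x, y) \<in> R\<^sup>*}"
  proof
    assume up: "\<forall>k::nat. (c, y0 + int k) \<notin> S"
    have reach: "\<And>k. (x, (c, y0 + int k)) \<in> R\<^sup>*"
    proof -
      fix k show "(x, (c, y0 + int k)) \<in> R\<^sup>*"
      proof (induction k)
        case 0 then show ?case using xe by simp
      next
        case (Suc k)
        have "((c, y0 + int k), (c, y0 + int (Suc k))) \<in> R"
          unfolding R_def using up[rule_format, of k] up[rule_format, of "Suc k"]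
          by (simp add: tri_adj_pair)
        then show ?case using Suc by (meson rtrancl_into_rtrancl)
      qed
    qed
    have inj: "inj (\<lambda>k::nat. (c, y0 + int k))" by (auto intro: injI)
    have "range (\<lambda>k::nat. (c, y0 + int k)) \<subseteq> {y. (x, y) \<in> R\<^sup>*}" using reach by auto
    moreover have "infinite (range (\<lambda>k::nat. (c, y0 + int k)))"
      using inj finite_imageD by blast
    ultimately show ?thesis using finite_subset by blast
  next
    assume dn: "\<forall>k::nat. (c, y0 - int k) \<notin> S"
    have reach: "\<And>k. (x, (c, y0 - int k)) \<in> R\<^sup>*"
    proof -
      fix k show "(x, (c, y0 - int k)) \<in> R\<^sup>*"
      proof (induction k)
        case 0 then show ?case using xe by simp
      next
        case (Suc k)
        have "((c, y0 - int k), (c, y0 - int (Suc k))) \<in> R"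
          unfolding R_def using dn[rule_format, of k] dn[rule_format, of "Suc k"]
          by (simp add: tri_adj_pair)
        then show ?case using Suc by (meson rtrancl_into_rtrancl)
      qed
    qed
    have inj: "inj (\<lambda>k::nat. (c, y0 - int k))" by (auto intro: injI)
    have "range (\<lambda>k::nat. (c, y0 - int k)) \<subseteq> {y. (x, y) \<in> R\<^sup>*}" using reach by auto
    moreover have "infinite (range (\<lambda>k::nat. (c, y0 - int k)))"
      using inj finite_imageD by blast
    ultimately show ?thesis using finite_subset by blast
  qed
qed


lemma gS_props:
  assumes w: "\<forall>x\<in>set w. x \<le> 2"
  shows "finite (gS w) \<and> card (gS w) = length w + 1 \<and> card (darts (gS w)) \<le> 2 * length w
    \<and> conf_connected (gS w) \<and> hole_free (gS w) \<and> (0,0) \<in> gS w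
    \<and> (\<forall>v\<in>gS w. 0 \<le> fst v \<and> (fst v = 0 \<longrightarrow> 0 \<le> snd v))"
proof -
  note rp = run_props[OF Inv_init w]
  have d0: "darts (fst init) = {}" unfolding init_def darts_def using tri_adj_irrefl by auto
  have c0: "conf_connected (fst init)" unfolding init_def conf_connected_def by auto
  obtain S q lo hi up where r: "run init w = (S,q,lo,hi,up)" by (cases "run init w")
  have I: "Inv (S,q,lo,hi,up)" using rp r by simp
  then have "finite S \<and> colconv S \<and> (0,0) \<in> S \<and> (\<forall>v\<in>S. 0 \<le> fst v) \<and> (\<forall>y. (0,y)\<in>S \<longrightarrow> 0 \<le> y)"
    unfolding Inv_def by auto
  then have "finite S \<and> hole_free S \<and> (0,0) \<in> S \<and> (\<forall>v\<in>S. 0 \<le> fst v \<and> (fst v = 0 \<longrightarrow> 0 \<le> snd v))"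
    using hole_free_colconv by (metis prod.collapse)
  then show ?thesis using rp r d0 c0 unfolding gS_def by (simp add: init_def)
qed



lemma fut_step:
  assumes "S' = insert n S" "S' \<subseteq> R" "\<forall>v\<in>R-S'. P' v" "P n" "\<forall>v. P' v \<longrightarrow> P v"
  shows "S \<subseteq> R \<and> (\<forall>v\<in>R-S. P v)"
  using assms by blast

lemma fut:
  assumes "Inv (S,q,lo,hi,up)" and "\<forall>x\<in>set w. x \<le> 2"
  shows "S \<subseteq> fst (run (S,q,lo,hi,up) w) \<and>
    (\<forall>v \<in> fst (run (S,q,lo,hi,up) w) - S. q \<le> fst v \<and> (fst v = q \<longrightarrow> (if up then hi < snd v else snd v < lo)))"
  using assms
proof (induction w arbitrary: S q lo hi up)
  case Nil then show ?case by simp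
next
  case (Cons x w)
  have x: "x \<le> 2" using Cons.prems by simp
  have I': "Inv (step (S,q,lo,hi,up) x)" using step_facts[OF Cons.prems(1) x] by blast
  have lh: "lo \<le> hi" using Cons.prems(1) unfolding Inv_def by simp
  have ws: "\<forall>x\<in>set w. x \<le> 2" using Cons.prems by simp
  consider (a) "x = 0" "up" | (b) "x = 0" "\<not> up" | (c) "x = 1" | (d) "x = 2" using x by linarith
  then show ?case
  proof cases
    case a
    have st: "step (S,q,lo,hi,up) x = (insert (q,hi+1) S, q, lo, hi+1, True)" using a by (simp add: step_def)
    have IH: "insert (q,hi+1) S \<subseteq> fst (run (insert (q,hi+1) S, q, lo, hi+1, True) w) \<and>
      (\<forall>v \<in> fst (run (insert (q,hi+1) S, q, lo, hi+1, True) w) - insert (q,hi+1) S. q \<le> fst v \<and> (fst v = q \<longrightarrow> hi+1 < snd v))"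
      using Cons.IH[OF I'[unfolded st] ws] by simp
    show ?thesis unfolding run.simps st
      by (rule fut_step[OF refl conjunct1[OF IH] conjunct2[OF IH]]) (use a in auto)
  next
    case b
    have st: "step (S,q,lo,hi,up) x = (insert (q,lo-1) S, q, lo-1, hi, False)" using b by (simp add: step_def)
    have IH: "insert (q,lo-1) S \<subseteq> fst (run (insert (q,lo-1) S, q, lo-1, hi, False) w) \<and>
      (\<forall>v \<in> fst (run (insert (q,lo-1) S, q, lo-1, hi, False) w) - insert (q,lo-1) S. q \<le> fst v \<and> (fst v = q \<longrightarrow> snd v < lo-1))"
      using Cons.IH[OF I'[unfolded st] ws] by simp
    show ?thesis unfolding run.simps st
      by (rule fut_step[OF refl conjunct1[OF IH] conjunct2[OF IH]]) (use b in auto)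
  next
    case c
    have st: "step (S,q,lo,hi,up) x = (insert (q+1,lo-1) S, q+1, lo-1, lo-1, False)" using c by (simp add: step_def)
    have IH: "insert (q+1,lo-1) S \<subseteq> fst (run (insert (q+1,lo-1) S, q+1, lo-1, lo-1, False) w) \<and>
      (\<forall>v \<in> fst (run (insert (q+1,lo-1) S, q+1, lo-1, lo-1, False) w) - insert (q+1,lo-1) S. q+1 \<le> fst v)"
      using Cons.IH[OF I'[unfolded st] ws] by simp
    show ?thesis unfolding run.simps st
      by (rule fut_step[OF refl conjunct1[OF IH] conjunct2[OF IH]]) auto
  next
    case d
    have st: "step (S,q,lo,hi,up) x = (insert (q+1,hi) S, q+1, hi, hi, True)" using d by (simp add: step_def)
    have IH: "insert (q+1,hi) S \<subseteq> fst (run (insert (q+1,hi) S, q+1, hi, hi, True) w) \<and>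
      (\<forall>v \<in> fst (run (insert (q+1,hi) S, q+1, hi, hi, True) w) - insert (q+1,hi) S. q+1 \<le> fst v)"
      using Cons.IH[OF I'[unfolded st] ws] by simp
    show ?thesis unfolding run.simps st
      by (rule fut_step[OF refl conjunct1[OF IH] conjunct2[OF IH]]) auto
  qed
qed


lemma sep:
  assumes I: "Inv (S,q,lo,hi,up)" and xy: "x < y" "y \<le> 2"
    and w1: "\<forall>a\<in>set w1. a \<le> 2" and w2: "\<forall>a\<in>set w2. a \<le> 2"
  shows "fst (run (step (S,q,lo,hi,up) x) w1) \<noteq> fst (run (step (S,q,lo,hi,up) y) w2)"
proof -
  have x2: "x \<le> 2" using xy by simp
  define a where "a = newv (S,q,lo,hi,up) x"
  have sfx: "a \<notin> S" "fst (step (S,q,lo,hi,up) x) = insert a S"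
    using step_facts[OF I x2] unfolding a_def by auto
  obtain S1 q1 lo1 hi1 up1 where e1: "step (S,q,lo,hi,up) x = (S1,q1,lo1,hi1,up1)"
    by (cases "step (S,q,lo,hi,up) x")
  have "Inv (step (S,q,lo,hi,up) x)" using step_facts[OF I x2] by blast
  then have I1: "Inv (S1,q1,lo1,hi1,up1)" unfolding e1 .
  have "a \<in> fst (run (step (S,q,lo,hi,up) x) w1)"
    using fut[OF I1 w1] sfx e1 by auto
  moreover have "a \<notin> fst (run (step (S,q,lo,hi,up) y) w2)"
  proof
    assume ain: "a \<in> fst (run (step (S,q,lo,hi,up) y) w2)"
    have lh: "lo \<le> hi" using I unfolding Inv_def by simp
    consider (c) "y = 1" "x = 0" | (d) "y = 2" "x = 0" | (e) "y = 2" "x = 1" using xy by linarith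
    then show False
    proof cases
      case c
      have st: "step (S,q,lo,hi,up) y = (insert (q+1,lo-1) S, q+1, lo-1, lo-1, False)" using c by (simp add: step_def)
      have "Inv (step (S,q,lo,hi,up) y)" using step_facts[OF I xy(2)] by blast
      then have I2: "Inv (insert (q+1,lo-1) S, q+1, lo-1, lo-1, False)" unfolding st .
      have fa: "fst a = q" using c unfolding a_def newv_def by auto
      have ain2: "a \<in> fst (run (insert (q+1,lo-1) S, q+1, lo-1, lo-1, False) w2)" using ain st by simp
      have "a \<notin> insert (q+1,lo-1) S" using sfx(1) fa by (auto simp: prod_eq_iff)
      then have "q+1 \<le> fst a" using fut[OF I2 w2] ain2 by blast
      then show False using fa by simp
    next
      case d
      have st: "step (S,q,lo,hi,up) y = (insert (q+1,hi) S, q+1, hi, hi, True)" using d by (simp add: step_def)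
      have "Inv (step (S,q,lo,hi,up) y)" using step_facts[OF I xy(2)] by blast
      then have I2: "Inv (insert (q+1,hi) S, q+1, hi, hi, True)" unfolding st .
      have fa: "fst a = q" using d unfolding a_def newv_def by auto
      have ain2: "a \<in> fst (run (insert (q+1,hi) S, q+1, hi, hi, True) w2)" using ain st by simp
      have "a \<notin> insert (q+1,hi) S" using sfx(1) fa by (auto simp: prod_eq_iff)
      then have "q+1 \<le> fst a" using fut[OF I2 w2] ain2 by blast
      then show False using fa by simp
    next
      case e
      have st: "step (S,q,lo,hi,up) y = (insert (q+1,hi) S, q+1, hi, hi, True)" using e by (simp add: step_def)
      have "Inv (step (S,q,lo,hi,up) y)" using step_facts[OF I xy(2)] by blast
      then have I2: "Inv (insert (q+1,hi) S, q+1, hi, hi, True)" unfolding st .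
      have aa: "a = (q+1, lo-1)" using e unfolding a_def newv_def by auto
      have ain2: "a \<in> fst (run (insert (q+1,hi) S, q+1, hi, hi, True) w2)" using ain st by simp
      have "a \<notin> insert (q+1,hi) S" unfolding aa using sfx(1)[unfolded aa] lh by auto
      then have "fst a = q+1 \<longrightarrow> hi < snd a" using fut[OF I2 w2] ain2 by auto
      then show False using aa lh by simp
    qed
  qed
  ultimately show ?thesis by blast
qed

lemma run_inj:
  assumes "Inv s" "\<forall>a\<in>set w1. a \<le> 2" "\<forall>a\<in>set w2. a \<le> 2" "length w1 = length w2"
    "fst (run s w1) = fst (run s w2)"
  shows "w1 = w2"
  using assms
proof (induction w1 arbitrary: s w2)
  case Nil then show ?case by simp
next
  case (Cons x xs)
  obtain y ys where w2: "w2 = y # ys" using Cons.prems(4) by (cases w2) auto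
  obtain S q lo hi up where s: "s = (S,q,lo,hi,up)" by (cases s)
  have x: "x \<le> 2" and y: "y \<le> 2" using Cons.prems w2 by auto
  have eq: "fst (run (step s x) xs) = fst (run (step s y) ys)" using Cons.prems(5) w2 by simp
  show ?case
  proof (cases "x = y")
    case True
    then show ?thesis using Cons.IH[OF Inv_step[OF Cons.prems(1) x], of ys] Cons.prems w2 eq by simp
  next
    case False
    then consider "x < y" | "y < x" by linarith
    then show ?thesis
    proof cases
      case 1 then show ?thesis using sep[OF Cons.prems(1)[unfolded s] 1 y, of xs ys] eq s Cons.prems w2 by auto
    next
      case 2 then show ?thesis using sep[OF Cons.prems(1)[unfolded s] 2 x, of ys xs] eq s Cons.prems w2 by auto
    qed
  qed
qed


lemma vadd_pair: "vadd (a,b) (c,d) = (a+c, b+d)" by (simp add: vadd_def)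

lemma translate_normal:
  assumes A: "A = translate t B" and a0: "(0,0) \<in> A" and b0: "(0,0) \<in> B"
    and nA: "\<forall>v\<in>A. 0 \<le> fst v \<and> (fst v = 0 \<longrightarrow> 0 \<le> snd v)"
    and nB: "\<forall>v\<in>B. 0 \<le> fst v \<and> (fst v = 0 \<longrightarrow> 0 \<le> snd v)"
  shows "A = B"
proof -
  obtain t1 t2 where t: "t = (t1,t2)" by (cases t)
  obtain v where v: "v \<in> B" "vadd v t = (0,0)" using a0 A unfolding translate_def by auto
  obtain v1 v2 where vv: "v = (v1,v2)" by (cases v)
  have tA: "t \<in> A" using b0 A unfolding translate_def by (auto simp: t vadd_pair intro: image_eqI[of _ _ "(0,0)"])
  have e: "v1 = - t1" "v2 = - t2" using v(2) vv t by (auto simp: vadd_pair)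
  have "t1 = 0" using nA tA nB v(1) vv e t by force
  moreover have "t2 = 0" using nA tA nB v(1) vv e t \<open>t1 = 0\<close> by force
  ultimately have "t = (0,0)" using t by simp
  then show ?thesis using A unfolding translate_def by (simp add: vadd_def)
qed

lemma cls_inj:
  assumes w1: "\<forall>a\<in>set w1. a \<le> 2" and w2: "\<forall>a\<in>set w2. a \<le> 2" and l: "length w1 = length w2"
    and eq: "cls (gS w1) = cls (gS w2)"
  shows "w1 = w2"
proof -
  have "gS w1 \<in> cls (gS w1)" unfolding cls_def
    by (rule CollectI, rule exI[of _ "(0,0)"]) (simp add: translate_def vadd_def)
  then have "gS w1 \<in> cls (gS w2)" using eq by simp
  then obtain t where "gS w1 = translate t (gS w2)" unfolding cls_def by blast
  then have "gS w1 = gS w2" using translate_normal gS_props[OF w1] gS_props[OF w2] by blast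
  then show ?thesis using run_inj[OF Inv_init w1 w2 l] unfolding gS_def by simp
qed



lemma vadd_inj: "vadd x t = vadd y t \<Longrightarrow> x = y"
  by (cases x; cases y; cases t) (simp add: vadd_def)

lemma tri_adj_vadd: "tri_adj (vadd a t) (vadd b t) \<longleftrightarrow> tri_adj a b"
  unfolding tri_adj_iff by (simp add: vadd_def)

lemma darts_translate: "darts (translate t G) = (\<lambda>(a,b). (vadd a t, vadd b t)) ` darts G"
proof (intro set_eqI iffI)
  fix d assume "d \<in> darts (translate t G)"
  then obtain a b where ab: "a \<in> G" "b \<in> G" "d = (vadd a t, vadd b t)" "tri_adj (vadd a t) (vadd b t)"
    unfolding darts_def translate_def by auto
  then have "(a,b) \<in> darts G" unfolding darts_def by (simp add: tri_adj_vadd)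
  then show "d \<in> (\<lambda>(a,b). (vadd a t, vadd b t)) ` darts G" using ab(3) by (intro image_eqI[of _ _ "(a,b)"]) auto
next
  fix d assume "d \<in> (\<lambda>(a,b). (vadd a t, vadd b t)) ` darts G"
  then show "d \<in> darts (translate t G)" unfolding darts_def translate_def by (auto simp: tri_adj_vadd)
qed

lemma card_darts_translate: "card (darts (translate t G)) = card (darts G)"
proof -
  have "inj_on (\<lambda>(a,b). (vadd a t, vadd b t)) (darts G)"
    by (auto intro!: inj_onI dest: vadd_inj)
  then show ?thesis unfolding darts_translate by (rule card_image)
qed

lemma conn_noiso:
  assumes c: "conf_connected S" and v: "v \<in> S" and w: "w \<in> S" and vw: "v \<noteq> w"
  shows "\<exists>z\<in>S. tri_adj v z"
proof -
  have "(v,w) \<in> {(a, b). a \<in> S \<and> b \<in> S \<and> tri_adj a b}\<^sup>*" using c v w unfolding conf_connected_def by blast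
  then show ?thesis using vw by (cases rule: converse_rtranclE) auto
qed


lemma perim_cls:
  assumes w: "\<forall>a\<in>set w. a \<le> 2"
  shows "perim_class (cls (gS w)) \<le> 2 * length w"
proof -
  define G where "G = gS w"
  note gp = gS_props[OF w, folded G_def]
  have "G \<in> cls G" unfolding cls_def
    by (rule CollectI, rule exI[of _ "(0,0)"]) (simp add: translate_def vadd_def)
  then have "(SOME S. S \<in> cls G) \<in> cls G" by (rule someI)
  then obtain t where St: "(SOME S. S \<in> cls G) = translate t G" unfolding cls_def by blast
  define S where "S = translate t G"
  have pc: "perim_class (cls G) = perimeter S" unfolding perim_class_def St S_def ..
  have injt: "inj_on (\<lambda>x. vadd x t) G" by (auto intro: inj_onI dest: vadd_inj)
  have finS: "finite S" unfolding S_def translate_def using gp by simp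
  have cS: "card S = card G" unfolding S_def translate_def using card_image[OF injt] .
  show ?thesis
  proof (cases "card S \<le> 1")
    case True
    then show ?thesis unfolding G_def[symmetric] pc perimeter_def by simp
  next
    case False
    then have c2: "2 \<le> card S" by simp
    have noG: "\<forall>v\<in>G. \<exists>z\<in>G. tri_adj v z"
    proof
      fix v assume v: "v \<in> G"
      have "\<exists>u\<in>G. u \<noteq> v"
      proof (rule ccontr)
        assume "\<not> ?thesis"
        then have "G \<subseteq> {v}" by blast
        then have "card G \<le> 1" using card_mono[of "{v}" G] by simp
        then show False using c2 cS by simp
      qed
      then show "\<exists>z\<in>G. tri_adj v z" using conn_noiso[of G v] gp v by metis
    qed
    have noS: "\<forall>v\<in>S. \<exists>z\<in>S. tri_adj v z"
    proof
      fix v assume "v \<in> S"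
      then obtain v0 where v0: "v0 \<in> G" "v = vadd v0 t" unfolding S_def translate_def by auto
      then obtain z0 where "z0 \<in> G" "tri_adj v0 z0" using noG by blast
      then show "\<exists>z\<in>S. tri_adj v z" using v0 unfolding S_def translate_def
        by (auto simp: tri_adj_vadd)
    qed
    have "perimeter S \<le> card (darts S)" by (rule perim_le[OF finS c2 noS])
    also have "\<dots> = card (darts G)" unfolding S_def by (rule card_darts_translate)
    also have "\<dots> \<le> 2 * length w" using gp by simp
    finally show ?thesis unfolding G_def[symmetric] pc .
  qed
qed


lemma relpow_bound:
  assumes R: "R \<subseteq> {(a,b). tri_adj a b}"
  shows "(a,b) \<in> R^^k \<Longrightarrow> \<bar>fst b - fst a\<bar> \<le> int k \<and> \<bar>snd b - snd a\<bar> \<le> int k"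
proof (induction k arbitrary: b)
  case 0 then show ?case by simp
next
  case (Suc k)
  then obtain c where c: "(a,c) \<in> R^^k" "(c,b) \<in> R" by auto
  have "tri_adj c b" using c(2) R by auto
  then have "\<bar>fst b - fst c\<bar> \<le> 1 \<and> \<bar>snd b - snd c\<bar> \<le> 1" unfolding tri_adj_iff by auto
  then show ?case using Suc.IH[OF c(1)] by (simp add: abs_le_iff)
qed

lemma translate_translate: "translate w (translate u S) = translate (vadd u w) S"
  unfolding translate_def by (simp add: image_image vadd_def add.assoc)

lemma cls_translate: "cls (translate t S) = cls S"
proof
  show "cls (translate t S) \<subseteq> cls S"
    unfolding cls_def using translate_translate by blast
next
  show "cls S \<subseteq> cls (translate t S)"
  proof
    fix X assume "X \<in> cls S"
    then obtain w where X: "X = translate w S" unfolding cls_def by blast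
    define u where "u = vadd (- fst t, - snd t) w"
    have "vadd t u = w" unfolding u_def by (simp add: vadd_def)
    then have "X = translate u (translate t S)" using X translate_translate by metis
    then show "X \<in> cls (translate t S)" unfolding cls_def by blast
  qed
qed

lemma Omega_finite: "finite (Omega n)"
proof -
  define K where "K = int (n*n)"
  define B where "B = {-K..K} \<times> {-K..K}"
  have "Omega n \<subseteq> cls ` Pow B"
  proof
    fix C assume "C \<in> Omega n"
    then obtain S where C: "C = cls S" and fin: "finite S" and cS: "card S = n" and con: "conf_connected S"
      unfolding Omega_def cls_def by blast
    show "C \<in> cls ` Pow B"
    proof (cases "S = {}")
      case True then show ?thesis using C by blast
    next
      case False
      then obtain x0 where x0: "x0 \<in> S" by blast
      define t where "t = (- fst x0, - snd x0)"
      define T where "T = translate t S"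
      have cT: "cls T = cls S" unfolding T_def by (rule cls_translate)
      define R where "R = {(a, b). a \<in> S \<and> b \<in> S \<and> tri_adj a b}"
      have RS: "R \<subseteq> S \<times> S" unfolding R_def by auto
      then have finR: "finite R" using fin by (metis finite_SigmaI finite_subset)
      have "card R \<le> card (S \<times> S)" using RS fin by (intro card_mono) auto
      then have cR: "card R \<le> n*n" using cS by (simp add: card_cartesian_product)
      have "T \<subseteq> B"
      proof
        fix y assume "y \<in> T"
        then obtain v where v: "v \<in> S" "y = vadd v t" unfolding T_def translate_def by auto
        have "(x0,v) \<in> R\<^sup>*" using con x0 v unfolding conf_connected_def R_def by blast
        then obtain k where k: "k \<le> card R" "(x0,v) \<in> R^^k"
          using rtrancl_finite_eq_relpow[OF finR] by blast
        have "\<bar>fst v - fst x0\<bar> \<le> int k \<and> \<bar>snd v - snd x0\<bar> \<le> int k"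
          by (rule relpow_bound[OF _ k(2)]) (auto simp: R_def)
        moreover have "int k \<le> K" using k(1) cR unfolding K_def by linarith
        ultimately show "y \<in> B" unfolding B_def v t_def by (auto simp: vadd_def)
      qed
      then show ?thesis using C cT by blast
    qed
  qed
  moreover have "finite (cls ` Pow B)" unfolding B_def by simp
  ultimately show ?thesis by (rule finite_subset)
qed


theorem lemma19:
  fixes lam :: real and n :: nat
  assumes "lam \<ge> 1" and "n \<ge> 1"
  shows "(\<Sum>C\<in>Omega n. 1 / lam ^ perim_class C) \<ge> 0.12 * (1.67 / lam) ^ (2 * n - 2)"
proof -
  define m where "m = n - 1"
  have nm: "n = m + 1" using assms(2) unfolding m_def by simp
  have lam0: "lam > 0" using assms(1) by simp
  define W where "W = {w. set w \<subseteq> {0,1,2::nat} \<and> length w = m}"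
  have c3: "card {0,1,2::nat} = 3" by simp
  have "card W = card {0,1,2::nat} ^ m" unfolding W_def by (rule card_lists_length_eq) simp
  then have cW: "card W = 3^m" by (simp only: c3)
  have val: "\<And>w. w \<in> W \<Longrightarrow> \<forall>a\<in>set w. a \<le> 2" unfolding W_def by auto
  define F where "F = (\<lambda>w. cls (gS w)) ` W"
  have inj: "inj_on (\<lambda>w. cls (gS w)) W"
    by (rule inj_onI) (use cls_inj val in \<open>auto simp: W_def\<close>)
  have cF: "card F = 3^m" unfolding F_def using card_image[OF inj] cW by simp
  have FO: "F \<subseteq> Omega n"
  proof
    fix C assume "C \<in> F"
    then obtain w where w: "w \<in> W" "C = cls (gS w)" unfolding F_def by blast
    note gp = gS_props[OF val[OF w(1)]]
    have "length w + 1 = n" using w(1) nm unfolding W_def by simp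
    then show "C \<in> Omega n" unfolding Omega_def w(2) cls_def using gp by blast
  qed
  have tm: "\<And>C. C \<in> F \<Longrightarrow> 1 / lam ^ (2*m) \<le> 1 / lam ^ perim_class C"
  proof -
    fix C assume "C \<in> F"
    then obtain w where w: "w \<in> W" "C = cls (gS w)" unfolding F_def by blast
    have "perim_class C \<le> 2 * m" using perim_cls[OF val[OF w(1)]] w W_def by simp
    then have "lam ^ perim_class C \<le> lam ^ (2*m)" using assms(1) by (rule power_increasing)
    then show "1 / lam ^ (2*m) \<le> 1 / lam ^ perim_class C"
      using lam0 by (intro divide_left_mono) auto
  qed
  have "(\<Sum>C\<in>F. 1 / lam ^ perim_class C) \<le> (\<Sum>C\<in>Omega n. 1 / lam ^ perim_class C)"
    by (rule sum_mono2[OF Omega_finite FO]) (use lam0 in simp)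
  moreover have "(\<Sum>C\<in>F. 1 / lam ^ (2*m)) \<le> (\<Sum>C\<in>F. 1 / lam ^ perim_class C)"
    by (rule sum_mono) (rule tm)
  moreover have "(\<Sum>C\<in>F. 1 / lam ^ (2*m)) = 3^m / lam ^ (2*m)" using cF by simp
  moreover have "0.12 * (1.67 / lam) ^ (2 * n - 2) \<le> 3^m / lam ^ (2*m)"
  proof -
    have e: "2 * n - 2 = 2 * m" using nm by simp
    have "(1.67::real) ^ (2*m) = (1.67^2) ^ m" by (simp add: power_mult)
    also have "\<dots> \<le> 3 ^ m" by (rule power_mono) (auto simp: power2_eq_square)
    finally have h: "(1.67::real) ^ (2*m) \<le> 3^m" .
    have "0.12 * (1.67 / lam) ^ (2 * n - 2) = 0.12 * 1.67 ^ (2*m) / lam ^ (2*m)"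
      unfolding e by (simp add: power_divide)
    also have "\<dots> \<le> 1.67 ^ (2*m) / lam ^ (2*m)"
      using lam0 by (intro divide_right_mono) auto
    also have "\<dots> \<le> 3^m / lam ^ (2*m)"
      using lam0 h by (intro divide_right_mono) auto
    finally show ?thesis .
  qed
  ultimately show ?thesis by linarith
qed


end
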